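(* As operators on smooth functions on the total space $\mathfrak X$ (with $\Box$ acting fiberwise): (1) $(\Box+1)v_k-v_k(\Box+1)=\Box v_k-v_k\Box=\xi_k$; (2) $(\Box+1)\overline{v_l}-\overline{v_l}(\Box+1)=\Box\overline{v_l}-\overline{v_l}\Box=\bar\xi_l$; (3) $\xi_k(f)=-A_k\,\partial_z(\lambda^{-1}\partial_zf)=-A_kP(f)$. Furthermore, $(\Box+1)v_k(e_{i\bar j})=\xi_k(e_{i\bar j})+\xi_i(e_{k\bar j})+L_{v_k}B_i\cdot\overline{B_j}$.
   Context: $g\ge2$, $n=3g-3$. Over a local chart of (a manifold cover of) $\mathcal M_g$ with holomorphic coordinates $s_1,\dots,s_n$, $\partial_i=\partial/\partial s_i$, let $\pi:\mathfrak X\to$ chart be the universal family with local fiber coordinate $z$. Each fiber carries the hyperbolic metric $\frac{\sqrt{-1}}2\lambda\,dz\wedge d\bar z$ with $\partial_z\partial_{\bar z}\log\lambda=\lambda$. $a_i=-\lambda^{-1}\partial_i\partial_{\bar z}\log\lambda$, $A_i=\partial_{\bar z}a_i$, $v_i=\partial_i+a_i\partial_z$, $B_i=A_i\,\partial_z\otimes d\bar z$ (harmonic Beltrami differential). $\Box=-\lambda^{-1}\partial_z\partial_{\bar z}$. $e_{i\bar j}=\partial_i\partial_{\bar j}\log\lambda-\lambda a_i\overline{a_j}$. $P(f)=\partial_z(\lambda^{-1}\partial_zf)$; $\xi_k(f)=-\lambda^{-1}\partial_z(A_k\partial_zf)$, $\bar\xi_l(f)=-\lambda^{-1}\partial_{\bar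 z}(\overline{A_l}\partial_{\bar z}f)$. $L_{v_k}$ is the Lie derivative along $v_k$ of fiberwise tensors (using the flow of $v_k$, which maps fibers to fibers). For Beltrami differentials $\mu=\mu(z)\,\partial_z\otimes d\bar z$ and $\nu=\nu(z)\,\partial_z\otimes d\bar z$, $\mu\cdot\bar\nu$ denotes the function $\mu\overline{\nu}$. *)

theory Defs
  imports "HOL-Analysis.Analysis"
begin

text \<open>Local chart of the total space: points (s, z) with s in C^n (base coordinates)
  and z the fibre coordinate.  Functions on the chart are complex valued.\<close>

type_synonym 'n pt = "(complex ^ 'n) \<times> complex"

definition dd :: "'n::finite pt \<Rightarrow> ('n pt \<Rightarrow> complex) \<Rightarrow> 'n pt \<Rightarrow> complex" where
  "dd w F p = vector_derivative (\<lambda>t::real. F (p + t *\<^sub>R w)) (at 0)"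

fun ddl :: "'n::finite pt list \<Rightarrow> ('n pt \<Rightarrow> complex) \<Rightarrow> 'n pt \<Rightarrow> complex" where
  "ddl [] F = F"
| "ddl (w # ws) F = dd w (ddl ws F)"

definition smooth_on :: "'n::finite pt set \<Rightarrow> ('n pt \<Rightarrow> complex) \<Rightarrow> bool" where
  "smooth_on U F \<longleftrightarrow> (\<forall>ws. \<forall>p\<in>U. ddl ws F differentiable (at p))"

definition dz :: "('n::finite pt \<Rightarrow> complex) \<Rightarrow> 'n pt \<Rightarrow> complex" where
  "dz F = (\<lambda>p. (dd (0, 1) F p - \<i> * dd (0, \<i>) F p) / 2)"

definition dzb :: "('n::finite pt \<Rightarrow> complex) \<Rightarrow> 'n pt \<Rightarrow> complex" where
  "dzb F = (\<lambda>p. (dd (0, 1) F p + \<i> * dd (0, \<i>) F p) / 2)"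

definition ds :: "'n::finite \<Rightarrow> ('n pt \<Rightarrow> complex) \<Rightarrow> 'n pt \<Rightarrow> complex" where
  "ds k F = (\<lambda>p. (dd (axis k 1, 0) F p - \<i> * dd (axis k \<i>, 0) F p) / 2)"

definition dsb :: "'n::finite \<Rightarrow> ('n pt \<Rightarrow> complex) \<Rightarrow> 'n pt \<Rightarrow> complex" where
  "dsb k F = (\<lambda>p. (dd (axis k 1, 0) F p + \<i> * dd (axis k \<i>, 0) F p) / 2)"

text \<open>Data attached to the fibrewise metric (i/2) lam dz /\ dzbar.\<close>
definition lamc :: "('n::finite pt \<Rightarrow> real) \<Rightarrow> 'n pt \<Rightarrow> complex" where
  "lamc lam = (\<lambda>p. complex_of_real (lam p))"

definition loglam :: "('n::finite pt \<Rightarrow> real) \<Rightarrow> 'n pt \<Rightarrow> complex" where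
  "loglam lam = (\<lambda>p. complex_of_real (ln (lam p)))"

definition acoef :: "('n::finite pt \<Rightarrow> real) \<Rightarrow> 'n \<Rightarrow> 'n pt \<Rightarrow> complex" where
  "acoef lam i = (\<lambda>p. - ds i (dzb (loglam lam)) p / lamc lam p)"

definition Acoef :: "('n::finite pt \<Rightarrow> real) \<Rightarrow> 'n \<Rightarrow> 'n pt \<Rightarrow> complex" where
  "Acoef lam i = dzb (acoef lam i)"

definition vk :: "('n::finite pt \<Rightarrow> real) \<Rightarrow> 'n \<Rightarrow> ('n pt \<Rightarrow> complex) \<Rightarrow> 'n pt \<Rightarrow> complex" where
  "vk lam k F = (\<lambda>p. ds k F p + acoef lam k p * dz F p)"

definition vbar :: "('n::finite pt \<Rightarrow> real) \<Rightarrow> 'n \<Rightarrow> ('n pt \<Rightarrow> complex) \<Rightarrow> 'n pt \<Rightarrow> complex" where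
  "vbar lam l F = (\<lambda>p. dsb l F p + cnj (acoef lam l p) * dzb F p)"

definition box :: "('n::finite pt \<Rightarrow> real) \<Rightarrow> ('n pt \<Rightarrow> complex) \<Rightarrow> 'n pt \<Rightarrow> complex" where
  "box lam F = (\<lambda>p. - dz (dzb F) p / lamc lam p)"

definition box1 :: "('n::finite pt \<Rightarrow> real) \<Rightarrow> ('n pt \<Rightarrow> complex) \<Rightarrow> 'n pt \<Rightarrow> complex" where
  "box1 lam F = (\<lambda>p. box lam F p + F p)"

definition ecoef :: "('n::finite pt \<Rightarrow> real) \<Rightarrow> 'n \<Rightarrow> 'n \<Rightarrow> 'n pt \<Rightarrow> complex" where
  "ecoef lam i j = (\<lambda>p. ds i (dsb j (loglam lam)) p - lamc lam p * acoef lam i p * cnj (acoef lam j p))"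

definition Pop :: "('n::finite pt \<Rightarrow> real) \<Rightarrow> ('n pt \<Rightarrow> complex) \<Rightarrow> 'n pt \<Rightarrow> complex" where
  "Pop lam F = dz (\<lambda>q. dz F q / lamc lam q)"

definition xi :: "('n::finite pt \<Rightarrow> real) \<Rightarrow> 'n \<Rightarrow> ('n pt \<Rightarrow> complex) \<Rightarrow> 'n pt \<Rightarrow> complex" where
  "xi lam k F = (\<lambda>p. - dz (\<lambda>q. Acoef lam k q * dz F q) p / lamc lam p)"

definition xib :: "('n::finite pt \<Rightarrow> real) \<Rightarrow> 'n \<Rightarrow> ('n pt \<Rightarrow> complex) \<Rightarrow> 'n pt \<Rightarrow> complex" where
  "xib lam l F = (\<lambda>p. - dzb (\<lambda>q. cnj (Acoef lam l q) * dzb F q) p / lamc lam p)"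

text \<open>Lie derivative of a fibrewise Beltrami differential mu d_z (x) dzbar along a vector field
  v = d_k + c d_z (whose flow maps fibres to fibres): with v(zbar) = 0 one gets L_v dzbar = 0 and
  [v, d_z] = -(d_z c) d_z, hence L_v(mu d_z (x) dzbar) = (v(mu) - mu d_z c) d_z (x) dzbar.
  The function below is the coefficient of d_z (x) dzbar.\<close>
definition lie_beltrami :: "'n::finite \<Rightarrow> ('n pt \<Rightarrow> complex) \<Rightarrow> ('n pt \<Rightarrow> complex) \<Rightarrow> 'n pt \<Rightarrow> complex" where
  "lie_beltrami k c mu = (\<lambda>p. ds k mu p + c p * dz mu p - mu p * dz c p)"

definition LvB :: "('n::finite pt \<Rightarrow> real) \<Rightarrow> 'n \<Rightarrow> 'n \<Rightarrow> 'n pt \<Rightarrow> complex" where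
  "LvB lam k i = lie_beltrami k (acoef lam k) (Acoef lam i)"

end

theory Submission
  imports Defs
begin


lemma dd_vd:
  assumes "(F has_derivative F') (at (q + t *\<^sub>R w))"
  shows "((\<lambda>s::real. F (q + s *\<^sub>R w)) has_vector_derivative F' w) (at t)"
proof -
  have l: "linear F'" using assms has_derivative_linear by blast
  have "((\<lambda>s::real. q + s *\<^sub>R w) has_derivative (\<lambda>s. s *\<^sub>R w)) (at t)"
    by (auto intro!: derivative_eq_intros)
  then have "((\<lambda>s::real. F (q + s *\<^sub>R w)) has_derivative (\<lambda>s. F' (s *\<^sub>R w))) (at t)"
    using has_derivative_compose[of "\<lambda>s::real. q + s *\<^sub>R w" "\<lambda>s. s *\<^sub>R w" t UNIV F F'] assms
    by (simp add: o_def)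
  then show ?thesis
    unfolding has_vector_derivative_def by (simp add: linear_scale l)
qed

lemma dd_has_derivative:
  assumes "(F has_derivative F') (at p)"
  shows "dd w F p = F' w"
  unfolding dd_def by (rule vector_derivative_at, rule dd_vd) (use assms in simp)

lemma dd_frechet:
  assumes "F differentiable (at p)"
  shows "dd w F p = frechet_derivative F (at p) w"
  using assms by (intro dd_has_derivative) (simp add: frechet_derivative_works)

lemma dd_local:
  assumes "open U" "\<forall>q\<in>U. F q = G q" "p \<in> U"
  shows "dd w F p = dd w G p"
proof -
  have "((\<lambda>t::real. p + t *\<^sub>R w) \<longlongrightarrow> p + 0 *\<^sub>R w) (nhds 0)"
    by (intro tendsto_intros filterlim_ident)
  then have "eventually (\<lambda>t. p + t *\<^sub>R w \<in> U) (nhds (0::real))"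
    using assms by (simp add: topological_tendstoD)
  then have "eventually (\<lambda>t. t \<in> UNIV \<longrightarrow> F (p + t *\<^sub>R w) = G (p + t *\<^sub>R w)) (nhds (0::real))"
    by eventually_elim (use assms in auto)
  then show ?thesis unfolding dd_def by (intro vector_derivative_cong_eq) auto
qed

lemma onorm_sc: "onorm (\<lambda>i::real. i *\<^sub>R v) = norm v"
  using onorm_scaleR_left[OF bounded_linear_ident, of v] onorm_id[where 'a=real] by simp

lemma norm3: "norm (A - B - C) \<le> norm A + norm B + norm (C::'a::real_normed_vector)"
proof -
  have "norm (A - B - C) \<le> norm (A - B) + norm C" by (rule norm_triangle_ineq4)
  moreover have "norm (A - B) \<le> norm A + norm B" by (rule norm_triangle_ineq4)
  ultimately show ?thesis by linarith
qed

lemma approx2: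
  fixes F :: "'n::finite pt \<Rightarrow> complex"
  assumes U: "open U" "p \<in> U" and dF: "\<forall>q\<in>U. F differentiable (at q)"
    and dG: "dd b F differentiable (at p)" and e: "e > 0"
  shows "\<exists>d>0. \<forall>h. 0 < h \<and> h < d \<longrightarrow>
     norm (F (p + h *\<^sub>R a + h *\<^sub>R b) - F (p + h *\<^sub>R a) - F (p + h *\<^sub>R b) + F p
          - (h^2) *\<^sub>R dd a (dd b F) p) \<le> e * h^2"
proof -
  define G where "G = dd b F"
  define G' where "G' = frechet_derivative G (at p)"
  have hG: "(G has_derivative G') (at p)" using dG unfolding G_def G'_def
    by (simp add: frechet_derivative_works)
  have bl: "bounded_linear G'" using hG has_derivative_bounded_linear by blast
  have c: "dd a (dd b F) p = G' a" using dd_has_derivative[OF hG] G_def by simp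
  define K where "K = norm a + norm b + 1"
  have K: "K > 0" unfolding K_def by (simp add: add_nonneg_pos)
  define e' where "e' = e / (4 * K)"
  have e': "e' > 0" using e K unfolding e'_def by simp
  obtain d1 where d1: "d1 > 0" and
    d1': "\<And>y. norm (y - p) < d1 \<Longrightarrow> norm (G y - G p - G' (y - p)) \<le> e' * norm (y - p)"
    using hG[unfolded has_derivative_at_alt] e' by blast
  obtain d0 where d0: "d0 > 0" and d0': "ball p d0 \<subseteq> U"
    using U open_contains_ball by blast
  define d where "d = min d0 d1 / K"
  have "d > 0" using d0 d1 K unfolding d_def by simp
  have main: "norm (F (p + h *\<^sub>R a + h *\<^sub>R b) - F (p + h *\<^sub>R a) - F (p + h *\<^sub>R b) + F p
          - (h^2) *\<^sub>R dd a (dd b F) p) \<le> e * h^2" if h: "0 < h" "h < d" for h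
  proof -
    have hK: "h * K < min d0 d1" using h K unfolding d_def by (simp add: field_simps)
    have nrm: "norm (s *\<^sub>R a + t *\<^sub>R b) \<le> h * K" if "0 \<le> s" "s \<le> h" "0 \<le> t" "t \<le> h" for s t
    proof -
      have "norm (s *\<^sub>R a + t *\<^sub>R b) \<le> s * norm a + t * norm b"
        using norm_triangle_ineq[of "s *\<^sub>R a" "t *\<^sub>R b"] that by simp
      also have "\<dots> \<le> h * norm a + h * norm b"
        using that by (intro add_mono mult_right_mono) auto
      also have "\<dots> \<le> h * K" unfolding K_def using h by (simp add: field_simps)
      finally show ?thesis .
    qed
    have inU: "p + (s *\<^sub>R a + t *\<^sub>R b) \<in> U" if "0 \<le> s" "s \<le> h" "0 \<le> t" "t \<le> h" for s t
    proof -
      have "dist p (p + (s *\<^sub>R a + t *\<^sub>R b)) < d0"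
        using nrm[OF that] hK dist_norm[of "p + (s *\<^sub>R a + t *\<^sub>R b)" p] dist_commute[of p]
        by simp
      then show ?thesis using d0' by auto
    qed
    define Ex where "Ex y = G y - G p - G' (y - p)" for y
    have Exb: "norm (Ex (p + (s *\<^sub>R a + t *\<^sub>R b))) \<le> e' * (h * K)"
      if "0 \<le> s" "s \<le> h" "0 \<le> t" "t \<le> h" for s t
    proof -
      have "norm (Ex (p + (s *\<^sub>R a + t *\<^sub>R b))) \<le> e' * norm (s *\<^sub>R a + t *\<^sub>R b)"
        unfolding Ex_def using d1'[of "p + (s *\<^sub>R a + t *\<^sub>R b)"] nrm[OF that] hK by simp
      also have "\<dots> \<le> e' * (h * K)" using nrm[OF that] e' by (simp add: mult_left_mono)
      finally show ?thesis .
    qed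
    define \<phi> where "\<phi> t = F (p + h *\<^sub>R a + t *\<^sub>R b) - F (p + t *\<^sub>R b)" for t
    define \<phi>' where "\<phi>' t = G (p + h *\<^sub>R a + t *\<^sub>R b) - G (p + t *\<^sub>R b)" for t
    have vd: "(\<phi> has_vector_derivative \<phi>' t) (at t)" if t: "t \<in> {0..h}" for t
    proof -
      have i1: "p + h *\<^sub>R a + t *\<^sub>R b \<in> U" using inU[of h t] t h by (simp add: add.assoc)
      have i2: "p + t *\<^sub>R b \<in> U" using inU[of 0 t] t h by simp
      have d1: "(F has_derivative frechet_derivative F (at (p + h *\<^sub>R a + t *\<^sub>R b))) (at (p + h *\<^sub>R a + t *\<^sub>R b))"
        using dF i1 frechet_derivative_works by blast
      have d2: "(F has_derivative frechet_derivative F (at (p + t *\<^sub>R b))) (at (p + t *\<^sub>R b))"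
        using dF i2 frechet_derivative_works by blast
      have e1: "G (p + h *\<^sub>R a + t *\<^sub>R b) = frechet_derivative F (at (p + h *\<^sub>R a + t *\<^sub>R b)) b"
        unfolding G_def by (rule dd_has_derivative[OF d1])
      have e2: "G (p + t *\<^sub>R b) = frechet_derivative F (at (p + t *\<^sub>R b)) b"
        unfolding G_def by (rule dd_has_derivative[OF d2])
      have v1: "((\<lambda>s. F (p + h *\<^sub>R a + s *\<^sub>R b)) has_vector_derivative G (p + h *\<^sub>R a + t *\<^sub>R b)) (at t)"
        unfolding e1 by (rule dd_vd) (rule d1)
      have v2: "((\<lambda>s. F (p + s *\<^sub>R b)) has_vector_derivative G (p + t *\<^sub>R b)) (at t)"
        unfolding e2 by (rule dd_vd) (rule d2)
      show ?thesis unfolding \<phi>_def \<phi>'_def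
        by (rule has_vector_derivative_diff[OF v1 v2])
    qed
    have B: "onorm ((\<lambda>i. i *\<^sub>R \<phi>' x) - (\<lambda>i. i *\<^sub>R \<phi>' 0)) \<le> 3 * (e' * (h * K))"
      if x: "x \<in> {0..h}" for x
    proof -
      have eq: "((\<lambda>i. i *\<^sub>R \<phi>' x) - (\<lambda>i. i *\<^sub>R \<phi>' 0)) = (\<lambda>i. i *\<^sub>R (\<phi>' x - \<phi>' 0))"
        by (auto simp: fun_eq_iff algebra_simps)
      have lin: "G' (h *\<^sub>R a + x *\<^sub>R b) - G' (x *\<^sub>R b) - G' (h *\<^sub>R a) = 0"
        using bl by (simp add: linear_simps)
      have "\<phi>' x - \<phi>' 0 = Ex (p + (h *\<^sub>R a + x *\<^sub>R b)) - Ex (p + (0 *\<^sub>R a + x *\<^sub>R b))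
            - Ex (p + (h *\<^sub>R a + 0 *\<^sub>R b)) + (G' (h *\<^sub>R a + x *\<^sub>R b) - G' (x *\<^sub>R b) - G' (h *\<^sub>R a))"
        unfolding \<phi>'_def Ex_def by (simp add: algebra_simps)
      also have "\<dots> = Ex (p + (h *\<^sub>R a + x *\<^sub>R b)) - Ex (p + (0 *\<^sub>R a + x *\<^sub>R b))
            - Ex (p + (h *\<^sub>R a + 0 *\<^sub>R b))" using lin by simp
      finally have "norm (\<phi>' x - \<phi>' 0) \<le> norm (Ex (p + (h *\<^sub>R a + x *\<^sub>R b)))
            + norm (Ex (p + (0 *\<^sub>R a + x *\<^sub>R b))) + norm (Ex (p + (h *\<^sub>R a + 0 *\<^sub>R b)))"
        by (metis norm3)
      also have "\<dots> \<le> 3 * (e' * (h * K))"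
      proof -
        have "norm (Ex (p + (h *\<^sub>R a + x *\<^sub>R b))) \<le> e' * (h * K)"
          by (rule Exb) (use x h in auto)
        moreover have "norm (Ex (p + (0 *\<^sub>R a + x *\<^sub>R b))) \<le> e' * (h * K)"
          by (rule Exb) (use x h in auto)
        moreover have "norm (Ex (p + (h *\<^sub>R a + 0 *\<^sub>R b))) \<le> e' * (h * K)"
          by (rule Exb) (use x h in auto)
        ultimately show ?thesis by linarith
      qed
      finally show ?thesis unfolding eq onorm_sc .
    qed
    have lin: "norm (\<phi> h - \<phi> 0 - (\<lambda>i. i *\<^sub>R \<phi>' 0) (h - 0)) \<le> norm (h - 0) * (3 * (e' * (h * K)))"
      by (rule differentiable_bound_linearization[where S="{0..h}" and f' = "\<lambda>x i. i *\<^sub>R \<phi>' x"])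
        (use h vd B in \<open>auto simp: has_vector_derivative_def intro: has_derivative_at_withinI\<close>)
    have ph0: "\<phi>' 0 = h *\<^sub>R G' a + Ex (p + (h *\<^sub>R a + 0 *\<^sub>R b))"
      unfolding \<phi>'_def Ex_def using bl by (simp add: linear_simps)
    have "F (p + h *\<^sub>R a + h *\<^sub>R b) - F (p + h *\<^sub>R a) - F (p + h *\<^sub>R b) + F p
          - (h^2) *\<^sub>R dd a (dd b F) p
          = (\<phi> h - \<phi> 0 - h *\<^sub>R \<phi>' 0) + h *\<^sub>R Ex (p + (h *\<^sub>R a + 0 *\<^sub>R b))"
      unfolding \<phi>_def ph0 c by (simp add: algebra_simps power2_eq_square)
    also have "norm \<dots> \<le> h * (3 * (e' * (h * K))) + h * (e' * (h * K))"
      using lin Exb[of h 0] h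
      by (intro order_trans[OF norm_triangle_ineq] add_mono) (auto intro: mult_left_mono)
    also have "\<dots> = e * h^2" unfolding e'_def using K by (simp add: field_simps power2_eq_square)
    finally show ?thesis .
  qed
  show ?thesis
  proof (intro exI[where x=d] conjI allI impI)
    show "d > 0" by fact
  next
    fix h assume H: "0 < h \<and> h < d"
    show "norm (F (p + h *\<^sub>R a + h *\<^sub>R b) - F (p + h *\<^sub>R a) - F (p + h *\<^sub>R b) + F p
          - (h^2) *\<^sub>R dd a (dd b F) p) \<le> e * h^2" using H by (intro main) auto
  qed
qed

lemma schwarz:
  fixes F :: "'n::finite pt \<Rightarrow> complex"
  assumes U: "open U" "p \<in> U" and dF: "\<forall>q\<in>U. F differentiable (at q)"
    and da: "dd a F differentiable (at p)" and db: "dd b F differentiable (at p)"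
  shows "dd a (dd b F) p = dd b (dd a F) p"
proof -
  define c1 where "c1 = dd a (dd b F) p"
  define c2 where "c2 = dd b (dd a F) p"
  have *: "norm (c1 - c2) \<le> 2 * e" if e: "e > 0" for e
  proof -
    obtain d1 where d1: "d1 > 0" "\<And>h. 0 < h \<and> h < d1 \<Longrightarrow>
     norm (F (p + h *\<^sub>R a + h *\<^sub>R b) - F (p + h *\<^sub>R a) - F (p + h *\<^sub>R b) + F p
          - (h^2) *\<^sub>R c1) \<le> e * h^2"
      using approx2[OF U dF db e, of a] unfolding c1_def by blast
    obtain d2 where d2: "d2 > 0" "\<And>h. 0 < h \<and> h < d2 \<Longrightarrow>
     norm (F (p + h *\<^sub>R b + h *\<^sub>R a) - F (p + h *\<^sub>R b) - F (p + h *\<^sub>R a) + F p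
          - (h^2) *\<^sub>R c2) \<le> e * h^2"
      using approx2[OF U dF da e, of b] unfolding c2_def by blast
    define h where "h = min d1 d2 / 2"
    have h: "0 < h" "h < d1" "h < d2" using d1 d2 unfolding h_def by auto
    define D where "D = F (p + h *\<^sub>R a + h *\<^sub>R b) - F (p + h *\<^sub>R a) - F (p + h *\<^sub>R b) + F p"
    have D2: "D = F (p + h *\<^sub>R b + h *\<^sub>R a) - F (p + h *\<^sub>R b) - F (p + h *\<^sub>R a) + F p"
      unfolding D_def by (simp add: add_ac)
    have "(h^2) *\<^sub>R (c1 - c2) = (D - (h^2) *\<^sub>R c2) - (D - (h^2) *\<^sub>R c1)"
      by (simp add: algebra_simps)
    then have "norm ((h^2) *\<^sub>R (c1 - c2)) \<le> norm (D - (h^2) *\<^sub>R c2) + norm (D - (h^2) *\<^sub>R c1)"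
      by (metis norm_triangle_ineq4)
    also have "\<dots> \<le> e * h^2 + e * h^2"
      using d1(2)[of h] d2(2)[of h] h unfolding D_def[symmetric] D2[symmetric] by (intro add_mono) auto
    finally have "h^2 * norm (c1 - c2) \<le> h^2 * (2 * e)"
      by (simp only: norm_scaleR abs_power2) (simp add: mult.commute)
    then show ?thesis using h by (simp add: mult_le_cancel_left_pos)
  qed
  have "norm (c1 - c2) = 0"
  proof (rule ccontr)
    assume "norm (c1 - c2) \<noteq> 0"
    then have pos: "norm (c1 - c2) > 0" by simp
    then have "norm (c1 - c2) \<le> 2 * (norm (c1 - c2) / 4)" by (intro *) simp
    then show False using pos by simp
  qed
  then show ?thesis unfolding c1_def c2_def by simp
qed



lemma dd_add:
  assumes "F differentiable (at p)" "G differentiable (at p)"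
  shows "dd w (\<lambda>q. F q + G q) p = dd w F p + dd w G p"
proof -
  obtain F' G' where f: "(F has_derivative F') (at p)" and g: "(G has_derivative G') (at p)"
    using assms unfolding differentiable_def by blast
  have D: "((\<lambda>q. F q + G q) has_derivative (\<lambda>h. F' h + G' h)) (at p)"
    using f g by (rule has_derivative_add)
  show ?thesis unfolding dd_has_derivative[OF f] dd_has_derivative[OF g] dd_has_derivative[OF D] by simp
qed

lemma dd_mult:
  assumes "F differentiable (at p)" "G differentiable (at p)"
  shows "dd w (\<lambda>q. F q * G q) p = dd w F p * G p + F p * dd w G p"
proof -
  obtain F' G' where f: "(F has_derivative F') (at p)" and g: "(G has_derivative G') (at p)"
    using assms unfolding differentiable_def by blast
  have D: "((\<lambda>q. F q * G q) has_derivative (\<lambda>h. F p * G' h + F' h * G p)) (at p)"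
    using f g by (rule has_derivative_mult)
  show ?thesis unfolding dd_has_derivative[OF f] dd_has_derivative[OF g] dd_has_derivative[OF D]
    by (simp add: add.commute)
qed

lemma dd_const: "dd w (\<lambda>q. c) p = 0"
  by (rule dd_has_derivative[where F'="\<lambda>h. 0", simplified]) (rule has_derivative_const)

lemma dd_minus:
  assumes "F differentiable (at p)"
  shows "dd w (\<lambda>q. - F q) p = - dd w F p"
proof -
  obtain F' where f: "(F has_derivative F') (at p)"
    using assms unfolding differentiable_def by blast
  have D: "((\<lambda>q. - F q) has_derivative (\<lambda>h. - F' h)) (at p)"
    using f by (rule has_derivative_minus)
  show ?thesis unfolding dd_has_derivative[OF f] dd_has_derivative[OF D] by simp
qed

lemma dd_cnj:
  assumes "F differentiable (at p)"
  shows "dd w (\<lambda>q. cnj (F q)) p = cnj (dd w F p)"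
proof -
  obtain F' where f: "(F has_derivative F') (at p)"
    using assms unfolding differentiable_def by blast
  have D: "((\<lambda>q. cnj (F q)) has_derivative (\<lambda>h. cnj (F' h))) (at p)"
    using bounded_linear.has_derivative[OF bounded_linear_cnj f] .
  show ?thesis unfolding dd_has_derivative[OF f] dd_has_derivative[OF D] by simp
qed

lemma dd_inverse:
  assumes "F differentiable (at p)" "F p \<noteq> 0"
  shows "dd w (\<lambda>q. inverse (F q)) p = - (inverse (F p) * dd w F p * inverse (F p))"
proof -
  obtain F' where f: "(F has_derivative F') (at p)"
    using assms unfolding differentiable_def by blast
  have D: "((\<lambda>q. inverse (F q)) has_derivative (\<lambda>h. - (inverse (F p) * F' h * inverse (F p)))) (at p)"
    using Deriv.has_derivative_inverse[OF assms(2) f] .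
  show ?thesis unfolding dd_has_derivative[OF f] dd_has_derivative[OF D] by simp
qed

lemma diff_add: "F differentiable (at p) \<Longrightarrow> G differentiable (at p) \<Longrightarrow> (\<lambda>q. F q + G q) differentiable (at p)"
  by (rule differentiable_add)
lemma diff_mult: "F differentiable (at p) \<Longrightarrow> G differentiable (at p) \<Longrightarrow> (\<lambda>q. F q * G q) differentiable (at p)"
  for F G :: "'a::real_normed_vector \<Rightarrow> complex"
  by (rule differentiable_mult)
lemma diff_cnj: "F differentiable (at p) \<Longrightarrow> (\<lambda>q. cnj (F q)) differentiable (at p)"
  using bounded_linear.has_derivative[OF bounded_linear_cnj] unfolding differentiable_def by blast
lemma diff_inverse: "F differentiable (at p) \<Longrightarrow> F p \<noteq> 0 \<Longrightarrow> (\<lambda>q. inverse (F q)) differentiable (at p)"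
  for F :: "'a::real_normed_vector \<Rightarrow> complex"
  unfolding differentiable_def using Deriv.has_derivative_inverse by blast

lemma dd_loglam:
  assumes "lamc lam differentiable (at p)" "lam p > 0"
  shows "dd w (loglam lam) p = dd w (lamc lam) p * inverse (lamc lam p)"
    and "loglam lam differentiable (at p)"
proof -
  obtain L' where L: "(lamc lam has_derivative L') (at p)"
    using assms unfolding differentiable_def by blast
  have re: "lam = (\<lambda>q. Re (lamc lam q))" by (simp add: lamc_def)
  have Lr: "((\<lambda>q. lam q) has_derivative (\<lambda>h. Re (L' h))) (at p)"
    using bounded_linear.has_derivative[OF bounded_linear_Re L] re by simp
  have ln: "((\<lambda>q. ln (lam q)) has_derivative (\<lambda>h. inverse (lam p) * Re (L' h))) (at p)"
    using has_derivative_ln[OF assms(2) Lr] by (simp add: mult.commute)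
  have lg: "(loglam lam has_derivative (\<lambda>h. of_real (inverse (lam p) * Re (L' h)))) (at p)"
    using bounded_linear.has_derivative[OF bounded_linear_of_real[where 'a=complex] ln] unfolding loglam_def by simp
  then show "loglam lam differentiable (at p)" unfolding differentiable_def by blast
  have im1: "((\<lambda>q. Im (lamc lam q)) has_derivative (\<lambda>h. Im (L' h))) (at p)"
    using bounded_linear.has_derivative[OF bounded_linear_Im L] .
  have im2: "((\<lambda>q. Im (lamc lam q)) has_derivative (\<lambda>h. 0)) (at p)"
    by (simp add: lamc_def)
  have fe: "(\<lambda>h. Im (L' h)) = (\<lambda>h. 0)" using has_derivative_unique[OF im1 im2] .
  have "Im (L' w) = 0" using fun_cong[OF fe, of w] by simp
  then have "L' w = of_real (Re (L' w))" by (simp add: complex_eq_iff)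
  then show "dd w (loglam lam) p = dd w (lamc lam) p * inverse (lamc lam p)"
    unfolding dd_has_derivative[OF lg] dd_has_derivative[OF L]
    by (simp add: lamc_def mult.commute)
qed

definition Ck :: "'n::finite pt set \<Rightarrow> nat \<Rightarrow> ('n pt \<Rightarrow> complex) \<Rightarrow> bool" where
  "Ck U n F \<longleftrightarrow> (\<forall>ws. length ws \<le> n \<longrightarrow> (\<forall>p\<in>U. ddl ws F differentiable (at p)))"

lemma ddl_snoc: "ddl (ws @ [w]) F = ddl ws (dd w F)"
  by (induction ws) auto

lemma ddl_local:
  assumes "open U" "\<forall>q\<in>U. F q = G q" "q \<in> U"
  shows "ddl ws F q = ddl ws G q"
  using assms(3)
proof (induction ws arbitrary: q)
  case Nil then show ?case using assms by simp
next
  case (Cons w ws)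
  then show ?case using dd_local[OF assms(1), of "ddl ws F" "ddl ws G" q w] by simp
qed

lemma diff_local:
  assumes "open U" "\<forall>q\<in>U. F q = G q" "p \<in> U" "F differentiable (at p)"
  shows "G differentiable (at p)"
proof -
  obtain F' where "(F has_derivative F') (at p)" using assms unfolding differentiable_def by blast
  then have "(G has_derivative F') (at p)"
    by (rule has_derivative_transform_within_open[OF _ assms(1) assms(3)]) (use assms in auto)
  then show ?thesis unfolding differentiable_def by blast
qed

lemma Ck_local:
  assumes "open U" "\<forall>q\<in>U. F q = G q" "Ck U n F"
  shows "Ck U n G"
  unfolding Ck_def
proof (intro allI impI ballI)
  fix ws :: "'a pt list" and p assume "length ws \<le> n" "p \<in> U"
  then have "ddl ws F differentiable (at p)" using assms(3) unfolding Ck_def by blast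
  moreover have "\<forall>q\<in>U. ddl ws F q = ddl ws G q" using ddl_local[OF assms(1,2)] by blast
  ultimately show "ddl ws G differentiable (at p)" using diff_local[OF assms(1)] \<open>p \<in> U\<close> by blast
qed

lemma Ck_0: "Ck U 0 F \<longleftrightarrow> (\<forall>p\<in>U. F differentiable (at p))"
  unfolding Ck_def by auto

lemma Ck_Suc: "Ck U (Suc n) F \<longleftrightarrow> (\<forall>p\<in>U. F differentiable (at p)) \<and> (\<forall>w. Ck U n (dd w F))"
proof
  assume A: "Ck U (Suc n) F"
  show "(\<forall>p\<in>U. F differentiable (at p)) \<and> (\<forall>w. Ck U n (dd w F))"
  proof
    show "\<forall>p\<in>U. F differentiable (at p)" using A unfolding Ck_def
      using A[unfolded Ck_def, rule_format, of "[]"] by simp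
    show "\<forall>w. Ck U n (dd w F)" unfolding Ck_def
    proof (intro allI impI)
      fix w :: "'a pt" and ws :: "'a pt list" assume "length ws \<le> n"
      then have "length (ws @ [w]) \<le> Suc n" by simp
      then show "\<forall>p\<in>U. ddl ws (dd w F) differentiable (at p)"
        using A[unfolded Ck_def, rule_format, of "ws @ [w]"] by (simp add: ddl_snoc)
    qed
  qed
next
  assume A: "(\<forall>p\<in>U. F differentiable (at p)) \<and> (\<forall>w. Ck U n (dd w F))"
  show "Ck U (Suc n) F" unfolding Ck_def
  proof (intro allI impI)
    fix ws :: "'a pt list" assume l: "length ws \<le> Suc n"
    show "\<forall>p\<in>U. ddl ws F differentiable (at p)"
    proof (cases ws rule: rev_exhaust)
      case Nil then show ?thesis using A by simp
    next
      case (snoc ys y)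
      then have "length ys \<le> n" using l by simp
      then show ?thesis using A unfolding snoc ddl_snoc Ck_def by blast
    qed
  qed
qed

lemma Ck_mono: "m \<le> n \<Longrightarrow> Ck U n F \<Longrightarrow> Ck U m F"
  unfolding Ck_def by auto

lemma smooth_Ck: "smooth_on U F \<longleftrightarrow> (\<forall>n. Ck U n F)"
proof
  assume "smooth_on U F" then show "\<forall>n. Ck U n F" unfolding smooth_on_def Ck_def by blast
next
  assume A: "\<forall>n. Ck U n F"
  show "smooth_on U F" unfolding smooth_on_def
  proof (intro allI ballI)
    fix ws :: "'a pt list" and p assume "p \<in> U"
    then show "ddl ws F differentiable (at p)" using A[rule_format, of "length ws", unfolded Ck_def] by blast
  qed
qed

lemma smooth_diff: "smooth_on U F \<Longrightarrow> p \<in> U \<Longrightarrow> F differentiable (at p)"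
  unfolding smooth_on_def using ddl.simps(1) by metis

lemma Ck_const: "Ck U n (\<lambda>q. c)"
proof (induction n arbitrary: c)
  case 0 then show ?case unfolding Ck_0 by simp
next
  case (Suc n)
  have e: "dd w (\<lambda>q. c) = (\<lambda>q. 0)" for w by (simp add: fun_eq_iff dd_const)
  show ?case unfolding Ck_Suc e using Suc by simp
qed

lemma Ck_add:
  assumes "open U"
  shows "Ck U n F \<Longrightarrow> Ck U n G \<Longrightarrow> Ck U n (\<lambda>q. F q + G q)"
proof (induction n arbitrary: F G)
  case 0 then show ?case unfolding Ck_0 by (simp add: differentiable_add)
next
  case (Suc n)
  have dF: "\<forall>p\<in>U. F differentiable (at p)" and dG: "\<forall>p\<in>U. G differentiable (at p)"
    using Suc.prems unfolding Ck_Suc by auto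
  have "Ck U n (dd w (\<lambda>q. F q + G q))" for w
  proof -
    have "Ck U n (dd w F)" "Ck U n (dd w G)" using Suc.prems unfolding Ck_Suc by blast+
    then have "Ck U n (\<lambda>q. dd w F q + dd w G q)" by (rule Suc.IH)
    moreover have "\<forall>q\<in>U. dd w F q + dd w G q = dd w (\<lambda>q. F q + G q) q"
    proof
      fix q assume "q \<in> U" then show "dd w F q + dd w G q = dd w (\<lambda>q. F q + G q) q"
        using dd_add[of F q G w] dF dG by simp
    qed
    ultimately show ?thesis by (rule Ck_local[OF assms, rotated])
  qed
  then show ?case unfolding Ck_Suc using dF dG by (simp add: differentiable_add)
qed

lemma Ck_mult:
  assumes "open U"
  shows "Ck U n F \<Longrightarrow> Ck U n G \<Longrightarrow> Ck U n (\<lambda>q. F q * G q)"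
proof (induction n arbitrary: F G)
  case 0 then show ?case unfolding Ck_0 by (simp add: differentiable_mult)
next
  case (Suc n)
  have dF: "\<forall>p\<in>U. F differentiable (at p)" and dG: "\<forall>p\<in>U. G differentiable (at p)"
    using Suc.prems unfolding Ck_Suc by auto
  have F: "Ck U n F" and G: "Ck U n G" using Suc.prems Ck_mono[of n "Suc n"] by auto
  have "Ck U n (dd w (\<lambda>q. F q * G q))" for w
  proof -
    have w: "Ck U n (dd w F)" "Ck U n (dd w G)" using Suc.prems unfolding Ck_Suc by blast+
    have "Ck U n (\<lambda>q. dd w F q * G q)" using w(1) G by (rule Suc.IH)
    moreover have "Ck U n (\<lambda>q. F q * dd w G q)" using F w(2) by (rule Suc.IH)
    ultimately have "Ck U n (\<lambda>q. dd w F q * G q + F q * dd w G q)"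
      by (rule Ck_add[OF assms])
    moreover have "\<forall>q\<in>U. dd w F q * G q + F q * dd w G q = dd w (\<lambda>q. F q * G q) q"
    proof
      fix q assume "q \<in> U" then show "dd w F q * G q + F q * dd w G q = dd w (\<lambda>q. F q * G q) q"
        using dd_mult[of F q G w] dF dG by simp
    qed
    ultimately show ?thesis by (rule Ck_local[OF assms, rotated])
  qed
  then show ?case unfolding Ck_Suc using dF dG by (simp add: differentiable_mult)
qed

lemma Ck_minus:
  assumes "open U"
  shows "Ck U n F \<Longrightarrow> Ck U n (\<lambda>q. - F q)"
  using Ck_mult[OF assms Ck_const[of U n "-1"], of F] by simp

lemma Ck_cnj:
  assumes "open U"
  shows "Ck U n F \<Longrightarrow> Ck U n (\<lambda>q. cnj (F q))"
proof (induction n arbitrary: F)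
  case 0 then show ?case unfolding Ck_0 by (simp add: diff_cnj)
next
  case (Suc n)
  have dF: "\<forall>p\<in>U. F differentiable (at p)" using Suc.prems unfolding Ck_Suc by auto
  have "Ck U n (dd w (\<lambda>q. cnj (F q)))" for w
  proof -
    have "Ck U n (dd w F)" using Suc.prems unfolding Ck_Suc by blast
    then have "Ck U n (\<lambda>q. cnj (dd w F q))" by (rule Suc.IH)
    moreover have "\<forall>q\<in>U. cnj (dd w F q) = dd w (\<lambda>q. cnj (F q)) q"
    proof
      fix q assume "q \<in> U" then show "cnj (dd w F q) = dd w (\<lambda>q. cnj (F q)) q"
        using dd_cnj[of F q w] dF by simp
    qed
    ultimately show ?thesis by (rule Ck_local[OF assms, rotated])
  qed
  then show ?case unfolding Ck_Suc using dF by (simp add: diff_cnj)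
qed

lemma smooth_dd: "smooth_on U F \<Longrightarrow> smooth_on U (dd w F)"
  unfolding smooth_on_def ddl_snoc[symmetric] by blast

lemma Ck_inverse:
  assumes "open U" "smooth_on U H" "\<forall>p\<in>U. H p \<noteq> 0"
  shows "Ck U n (\<lambda>q. inverse (H q))"
proof (induction n)
  case 0 then show ?case unfolding Ck_0 using assms
    using diff_inverse smooth_diff by blast
next
  case (Suc n)
  have dH: "\<forall>p\<in>U. H differentiable (at p)" using assms(2) smooth_diff by blast
  have "Ck U n (dd w (\<lambda>q. inverse (H q)))" for w
  proof -
    have dw: "Ck U n (dd w H)" using smooth_dd[OF assms(2)] smooth_Ck by blast
    then have "Ck U n (\<lambda>q. inverse (H q) * dd w H q)"
      using Suc.IH dw by (intro Ck_mult[OF assms(1)])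
    then have "Ck U n (\<lambda>q. inverse (H q) * dd w H q * inverse (H q))"
      using Suc.IH dw by (intro Ck_mult[OF assms(1)])
    then have "Ck U n (\<lambda>q. - (inverse (H q) * dd w H q * inverse (H q)))"
      by (rule Ck_minus[OF assms(1)])
    moreover have "\<forall>q\<in>U. - (inverse (H q) * dd w H q * inverse (H q)) = dd w (\<lambda>q. inverse (H q)) q"
    proof
      fix q assume "q \<in> U" then show "- (inverse (H q) * dd w H q * inverse (H q)) = dd w (\<lambda>q. inverse (H q)) q"
        using dd_inverse[of H q w] dH assms(3) by simp
    qed
    ultimately show ?thesis by (rule Ck_local[OF assms(1), rotated])
  qed
  then show ?case unfolding Ck_Suc using dH assms(3) by (simp add: diff_inverse)
qed

lemma smooth_add: "open U \<Longrightarrow> smooth_on U F \<Longrightarrow> smooth_on U G \<Longrightarrow> smooth_on U (\<lambda>q. F q + G q)"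
  by (simp add: smooth_Ck Ck_add)
lemma smooth_mult: "open U \<Longrightarrow> smooth_on U F \<Longrightarrow> smooth_on U G \<Longrightarrow> smooth_on U (\<lambda>q. F q * G q)"
  by (simp add: smooth_Ck Ck_mult)
lemma smooth_minus: "open U \<Longrightarrow> smooth_on U F \<Longrightarrow> smooth_on U (\<lambda>q. - F q)"
  by (simp add: smooth_Ck Ck_minus)
lemma smooth_cnj: "open U \<Longrightarrow> smooth_on U F \<Longrightarrow> smooth_on U (\<lambda>q. cnj (F q))"
  by (simp add: smooth_Ck Ck_cnj)
lemma smooth_const: "smooth_on U (\<lambda>q. c)"
  by (simp add: smooth_Ck Ck_const)
lemma smooth_inverse: "open U \<Longrightarrow> smooth_on U H \<Longrightarrow> \<forall>p\<in>U. H p \<noteq> 0 \<Longrightarrow> smooth_on U (\<lambda>q. inverse (H q))"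
  by (simp add: smooth_Ck Ck_inverse)
lemma smooth_local:
  assumes "open U" "\<forall>q\<in>U. F q = G q" "smooth_on U F" shows "smooth_on U G"
  unfolding smooth_Ck
proof
  fix n show "Ck U n G" using Ck_local[OF assms(1,2)] assms(3) unfolding smooth_Ck by blast
qed

lemma smooth_loglam:
  assumes "open U" "smooth_on U (lamc lam)" "\<forall>p\<in>U. lam p > 0"
  shows "smooth_on U (loglam lam)"
proof -
  have nz: "\<forall>p\<in>U. lamc lam p \<noteq> 0" using assms(3) by (auto simp add: lamc_def)
  have "Ck U n (loglam lam)" for n
  proof (cases n)
    case 0 show ?thesis unfolding 0 Ck_0 using dd_loglam(2) smooth_diff assms by blast
  next
    case (Suc m)
    have "Ck U m (dd w (loglam lam))" for w
    proof -
      have "smooth_on U (\<lambda>q. dd w (lamc lam) q * inverse (lamc lam q))"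
        using smooth_mult[OF assms(1) smooth_dd[OF assms(2)] smooth_inverse[OF assms(1,2) nz]] .
      moreover have "\<forall>q\<in>U. dd w (lamc lam) q * inverse (lamc lam q) = dd w (loglam lam) q"
        using assms by (simp add: dd_loglam(1) smooth_diff)
      ultimately have "smooth_on U (dd w (loglam lam))" by (rule smooth_local[OF assms(1), rotated])
      then show ?thesis unfolding smooth_Ck by blast
    qed
    then show ?thesis unfolding Suc Ck_Suc using dd_loglam(2) smooth_diff assms by blast
  qed
  then show ?thesis using smooth_Ck by blast
qed



lemma dd_lin:
  assumes "F differentiable (at p)" "G differentiable (at p)"
  shows "dd w (\<lambda>q. (F q + c * G q) / 2) p = (dd w F p + c * dd w G p) / 2"
proof -
  obtain F' G' where f: "(F has_derivative F') (at p)" and g: "(G has_derivative G') (at p)"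
    using assms unfolding differentiable_def by blast
  have D: "((\<lambda>q. (F q + c * G q) / 2) has_derivative (\<lambda>h. (F' h + c * G' h) / 2)) (at p)"
    using f g by (auto intro!: derivative_eq_intros)
  show ?thesis unfolding dd_has_derivative[OF f] dd_has_derivative[OF g] dd_has_derivative[OF D] by simp
qed

locale chart =
  fixes U :: "'n::finite pt set" and lam :: "'n pt \<Rightarrow> real"
  assumes U: "open U" and sm: "smooth_on U (lamc lam)" and pos: "\<forall>p\<in>U. lam p > 0"
    and pde: "\<forall>p\<in>U. dz (dzb (loglam lam)) p = lamc lam p"
begin

definition R :: "('n pt \<Rightarrow> complex) \<Rightarrow> 'n pt \<Rightarrow> complex" where
  "R F = (\<lambda>p. if p \<in> U then F p else 0)"

definition Wop :: "'n pt \<Rightarrow> 'n pt \<Rightarrow> complex \<Rightarrow> ('n pt \<Rightarrow> complex) \<Rightarrow> 'n pt \<Rightarrow> complex" where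
  "Wop a b c F = R (\<lambda>p. (dd a F p + c * dd b F p) / 2)"

definition "Dz = Wop (0, 1) (0, \<i>) (- \<i>)"
definition "Dzb = Wop (0, 1) (0, \<i>) \<i>"
definition "Ds k = Wop (axis k 1, 0) (axis k \<i>, 0) (- \<i>)"
definition "Dsb k = Wop (axis k 1, 0) (axis k \<i>, 0) \<i>"
definition "Lam = R (lamc lam)"
definition "Mu = R (\<lambda>p. inverse (lamc lam p))"
definition "Lg = R (loglam lam)"

abbreviation S where "S F \<equiv> smooth_on U F"

lemma R_in: "p \<in> U \<Longrightarrow> R F p = F p" and R_out: "p \<notin> U \<Longrightarrow> R F p = 0"
  unfolding R_def by auto

lemma R_agree: "\<forall>q\<in>U. R F q = F q" "\<forall>q\<in>U. F q = R F q"
  unfolding R_def by auto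

lemma W_in: "p \<in> U \<Longrightarrow> Wop a b c F p = (dd a F p + c * dd b F p) / 2"
  unfolding Wop_def R_def by simp
lemma W_out: "p \<notin> U \<Longrightarrow> Wop a b c F p = 0"
  unfolding Wop_def R_def by simp

lemma S_R: "S F \<Longrightarrow> S (R F)"
  using smooth_local[OF U R_agree(2)] by blast

lemma S_lin: "S F \<Longrightarrow> S (\<lambda>p. (dd a F p + c * dd b F p) / 2)"
proof -
  assume F: "S F"
  have 1: "S (\<lambda>p. (\<lambda>_. c) p * dd b F p)"
    by (rule smooth_mult[OF U smooth_const smooth_dd[OF F]])
  have 2: "S (\<lambda>p. dd a F p + (\<lambda>_. c) p * dd b F p)"
    by (rule smooth_add[OF U smooth_dd[OF F] 1])
  have "S (\<lambda>p. (dd a F p + (\<lambda>_. c) p * dd b F p) * (\<lambda>_. inverse 2) p)"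
    by (rule smooth_mult[OF U 2 smooth_const])
  then show ?thesis unfolding divide_inverse by simp
qed

lemma S_W: "S F \<Longrightarrow> S (Wop a b c F)"
  unfolding Wop_def by (intro S_R S_lin)

lemma W_R: "Wop a b c (R F) = Wop a b c F"
proof (rule ext)
  fix p show "Wop a b c (R F) p = Wop a b c F p"
  proof (cases "p \<in> U")
    case True
    then show ?thesis unfolding W_in[OF True] using dd_local[OF U R_agree(1) True] by simp
  qed (simp add: W_out)
qed

lemma W_add: "S F \<Longrightarrow> S G \<Longrightarrow> Wop a b c (\<lambda>q. F q + G q) = (\<lambda>q. Wop a b c F q + Wop a b c G q)"
proof (rule ext)
  fix p assume F: "S F" and G: "S G"
  show "Wop a b c (\<lambda>q. F q + G q) p = Wop a b c F p + Wop a b c G p"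
  proof (cases "p \<in> U")
    case True
    then show ?thesis unfolding W_in[OF True]
      using dd_add[of F p G] smooth_diff[OF F True] smooth_diff[OF G True] by (simp add: algebra_simps add_divide_distrib)
  qed (simp add: W_out)
qed

lemma W_mult: "S F \<Longrightarrow> S G \<Longrightarrow> Wop a b c (\<lambda>q. F q * G q) = (\<lambda>q. Wop a b c F q * G q + F q * Wop a b c G q)"
proof (rule ext)
  fix p assume F: "S F" and G: "S G"
  show "Wop a b c (\<lambda>q. F q * G q) p = Wop a b c F p * G p + F p * Wop a b c G p"
  proof (cases "p \<in> U")
    case True
    then show ?thesis unfolding W_in[OF True]
      using dd_mult[of F p G] smooth_diff[OF F True] smooth_diff[OF G True] by (simp add: field_simps)
  qed (simp add: W_out)
qed

lemma W_minus: "S F \<Longrightarrow> Wop a b c (\<lambda>q. - F q) = (\<lambda>q. - Wop a b c F q)"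
proof (rule ext)
  fix p assume F: "S F"
  show "Wop a b c (\<lambda>q. - F q) p = - Wop a b c F p"
  proof (cases "p \<in> U")
    case True
    then show ?thesis unfolding W_in[OF True]
      using dd_minus[of F p] smooth_diff[OF F True] by (simp add: field_simps)
  qed (simp add: W_out)
qed

lemma W_diff: "S F \<Longrightarrow> S G \<Longrightarrow> Wop a b c (\<lambda>q. F q - G q) = (\<lambda>q. Wop a b c F q - Wop a b c G q)"
proof -
  assume F: "S F" and G: "S G"
  have "Wop a b c (\<lambda>q. F q + (- G q)) = (\<lambda>q. Wop a b c F q + Wop a b c (\<lambda>q. - G q) q)"
    by (rule W_add[OF F smooth_minus[OF U G]])
  then show ?thesis using W_minus[OF G] by simp
qed

lemma W_const: "Wop a b c (\<lambda>q. k) = (\<lambda>q. 0)"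
  by (rule ext) (simp add: Wop_def R_def dd_const)

lemma W_comm:
  assumes F: "S F"
  shows "Wop a b c (Wop a' b' c' F) = Wop a' b' c' (Wop a b c F)"
proof (rule ext)
  fix p show "Wop a b c (Wop a' b' c' F) p = Wop a' b' c' (Wop a b c F) p"
  proof (cases "p \<in> U")
    case True
    have d: "\<forall>q\<in>U. dd x F differentiable (at q)" for x using smooth_diff[OF smooth_dd[OF F]] by blast
    have dd2: "\<forall>q\<in>U. dd x (dd y F) differentiable (at q)" for x y
      using smooth_diff[OF smooth_dd[OF smooth_dd[OF F]]] by blast
    have dF: "\<forall>q\<in>U. F differentiable (at q)" using smooth_diff[OF F] by blast
    have sw: "dd x (dd y F) p = dd y (dd x F) p" for x y
      by (rule schwarz[OF U True dF]) (use d True in auto)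
    have l1: "dd x (Wop a' b' c' F) p = (dd x (dd a' F) p + c' * dd x (dd b' F) p) / 2" for x
    proof -
      have "dd x (Wop a' b' c' F) p = dd x (\<lambda>q. (dd a' F q + c' * dd b' F q) / 2) p"
        unfolding Wop_def using dd_local[OF U R_agree(1) True] by simp
      also have "\<dots> = (dd x (dd a' F) p + c' * dd x (dd b' F) p) / 2"
        by (rule dd_lin) (use d True in auto)
      finally show ?thesis .
    qed
    have l2: "dd x (Wop a b c F) p = (dd x (dd a F) p + c * dd x (dd b F) p) / 2" for x
    proof -
      have "dd x (Wop a b c F) p = dd x (\<lambda>q. (dd a F q + c * dd b F q) / 2) p"
        unfolding Wop_def using dd_local[OF U R_agree(1) True] by simp
      also have "\<dots> = (dd x (dd a F) p + c * dd x (dd b F) p) / 2"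
        by (rule dd_lin) (use d True in auto)
      finally show ?thesis .
    qed
    show ?thesis unfolding W_in[OF True] l1 l2
      using sw[of a a'] sw[of a b'] sw[of b a'] sw[of b b'] by (simp add: field_simps)
  qed (simp add: W_out)
qed

lemma W_cnj: "S F \<Longrightarrow> cnj (Wop a b c F q) = Wop a b (cnj c) (\<lambda>q. cnj (F q)) q"
proof (cases "q \<in> U")
  case True
  assume F: "S F"
  then show ?thesis unfolding W_in[OF True]
    using dd_cnj[of F q] smooth_diff[OF F True] by simp
qed (simp add: W_out)

lemma lamc_nz: "p \<in> U \<Longrightarrow> lamc lam p \<noteq> 0"
  using pos by (auto simp: lamc_def)

lemma S_Lam: "S Lam" unfolding Lam_def by (rule S_R[OF sm])
lemma S_Mu: "S Mu" unfolding Mu_def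
  by (rule S_R, rule smooth_inverse[OF U sm]) (use lamc_nz in blast)
lemma S_Lg: "S Lg" unfolding Lg_def by (rule S_R, rule smooth_loglam[OF U sm pos])

lemma W_Lam: "Wop a b c Lam = (\<lambda>q. Lam q * Wop a b c Lg q)"
proof (rule ext)
  fix p show "Wop a b c Lam p = Lam p * Wop a b c Lg p"
  proof (cases "p \<in> U")
    case True
    have dl: "lamc lam differentiable (at p)" using smooth_diff[OF sm True] .
    have pp: "lam p > 0" using pos True by blast
    have nz: "lamc lam p \<noteq> 0" using lamc_nz[OF True] .
    show ?thesis unfolding Lam_def Lg_def W_R unfolding W_in[OF True] R_in[OF True]
      using dd_loglam(1)[OF dl pp, of a] dd_loglam(1)[OF dl pp, of b] nz by (simp add: field_simps)
  qed (simp add: W_out)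
qed

lemma W_Mu: "Wop a b c Mu = (\<lambda>q. - (Mu q * Wop a b c Lg q))"
proof (rule ext)
  fix p show "Wop a b c Mu p = - (Mu p * Wop a b c Lg p)"
  proof (cases "p \<in> U")
    case True
    have dl: "lamc lam differentiable (at p)" using smooth_diff[OF sm True] .
    have pp: "lam p > 0" using pos True by blast
    have nz: "lamc lam p \<noteq> 0" using lamc_nz[OF True] .
    show ?thesis unfolding Mu_def Lg_def W_R unfolding W_in[OF True] R_in[OF True]
      unfolding dd_loglam(1)[OF dl pp, of a] dd_loglam(1)[OF dl pp, of b]
        dd_inverse[OF dl nz, of a] dd_inverse[OF dl nz, of b] using nz by (simp add: field_simps)
  qed (simp add: W_out)
qed

lemma PDE: "Dz (Dzb Lg) = Lam"
proof (rule ext)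
  fix p show "Dz (Dzb Lg) p = Lam p"
  proof (cases "p \<in> U")
    case True
    have e1: "\<forall>q\<in>U. Dzb Lg q = dzb (loglam lam) q"
      unfolding Dzb_def Lg_def W_R by (auto simp: W_in dzb_def)
    have "Dz (Dzb Lg) p = dz (dzb (loglam lam)) p"
      unfolding Dz_def W_in[OF True] dz_def
      using dd_local[OF U e1 True, of "(0,1)"] dd_local[OF U e1 True, of "(0,\<i>)"] by simp
    also have "\<dots> = Lam p" using pde True by (simp add: Lam_def R_in)
    finally show ?thesis .
  qed (simp add: Dz_def W_out Lam_def R_out)
qed

lemma cnj_Lam: "cnj (Lam q) = Lam q" unfolding Lam_def R_def lamc_def by simp
lemma cnj_Mu: "cnj (Mu q) = Mu q" unfolding Mu_def R_def lamc_def by simp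
lemma cnj_Lg: "cnj (Lg q) = Lg q" unfolding Lg_def R_def loglam_def by simp

lemma R_add: "R (\<lambda>q. F q + G q) = (\<lambda>q. R F q + R G q)" by (auto simp: R_def)
lemma R_diff: "R (\<lambda>q. F q - G q) = (\<lambda>q. R F q - R G q)" by (auto simp: R_def)
lemma R_mult: "R (\<lambda>q. F q * G q) = (\<lambda>q. R F q * R G q)" by (auto simp: R_def)
lemma R_minus: "R (\<lambda>q. - F q) = (\<lambda>q. - R F q)" by (auto simp: R_def)
lemma R_cnj: "R (\<lambda>q. cnj (F q)) = (\<lambda>q. cnj (R F q))" by (auto simp: R_def)
lemma R_divl: "R (\<lambda>q. F q / lamc lam q) = (\<lambda>q. R F q * Mu q)"
  by (auto simp: R_def Mu_def divide_inverse)
lemma R_lamc: "R (lamc lam) = Lam" by (simp add: Lam_def)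
lemma R_loglam: "R (loglam lam) = Lg" by (simp add: Lg_def)
lemma R_dz: "R (dz F) = Dz (R F)"
  unfolding Dz_def W_R by (auto simp: Wop_def dz_def R_def)
lemma R_dzb: "R (dzb F) = Dzb (R F)"
  unfolding Dzb_def W_R by (auto simp: Wop_def dzb_def R_def)
lemma R_ds: "R (ds k F) = Ds k (R F)"
  unfolding Ds_def W_R by (auto simp: Wop_def ds_def R_def)
lemma R_dsb: "R (dsb k F) = Dsb k (R F)"
  unfolding Dsb_def W_R by (auto simp: Wop_def dsb_def R_def)

lemma top_dz: "p \<in> U \<Longrightarrow> dz F p = Dz (R F) p" using R_dz R_in by metis
lemma top_dzb: "p \<in> U \<Longrightarrow> dzb F p = Dzb (R F) p" using R_dzb R_in by metis
lemma top_ds: "p \<in> U \<Longrightarrow> ds k F p = Ds k (R F) p" using R_ds R_in by metis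
lemma top_dsb: "p \<in> U \<Longrightarrow> dsb k F p = Dsb k (R F) p" using R_dsb R_in by metis
lemma top_lamc: "p \<in> U \<Longrightarrow> lamc lam p = Lam p" by (simp add: Lam_def R_in)
lemma top_divl: "p \<in> U \<Longrightarrow> x / lamc lam p = x * Mu p" by (simp add: Mu_def R_in divide_inverse)

lemma S_add: "S F \<Longrightarrow> S G \<Longrightarrow> S (\<lambda>q. F q + G q)" by (rule smooth_add[OF U])
lemma S_mult: "S F \<Longrightarrow> S G \<Longrightarrow> S (\<lambda>q. F q * G q)" by (rule smooth_mult[OF U])
lemma S_minus: "S F \<Longrightarrow> S (\<lambda>q. - F q)" by (rule smooth_minus[OF U])
lemma S_diff: "S F \<Longrightarrow> S G \<Longrightarrow> S (\<lambda>q. F q - G q)"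
  using smooth_add[OF U _ smooth_minus[OF U], of F G] by simp
lemma S_cnj: "S F \<Longrightarrow> S (\<lambda>q. cnj (F q))" by (rule smooth_cnj[OF U])
lemma S_const: "S (\<lambda>q. k)" by (rule smooth_const)

lemma Dz_add: "S F \<Longrightarrow> S G \<Longrightarrow> Dz (\<lambda>q. F q + G q) = (\<lambda>q. Dz F q + Dz G q)"
  unfolding Dz_def by (rule W_add)
lemma Dz_mult: "S F \<Longrightarrow> S G \<Longrightarrow> Dz (\<lambda>q. F q * G q) = (\<lambda>q. Dz F q * G q + F q * Dz G q)"
  unfolding Dz_def by (rule W_mult)
lemma Dz_minus: "S F \<Longrightarrow> Dz (\<lambda>q. - F q) = (\<lambda>q. - Dz F q)"
  unfolding Dz_def by (rule W_minus)
lemma Dz_diff: "S F \<Longrightarrow> S G \<Longrightarrow> Dz (\<lambda>q. F q - G q) = (\<lambda>q. Dz F q - Dz G q)"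
  unfolding Dz_def by (rule W_diff)
lemma Dz_const: "Dz (\<lambda>q. c) = (\<lambda>q. 0)"
  unfolding Dz_def by (rule W_const)
lemma Dz_R: "Dz (R F) = Dz F"
  unfolding Dz_def by (rule W_R)
lemma Dz_S: "S F \<Longrightarrow> S (Dz F)"
  unfolding Dz_def by (rule S_W)
lemma Dz_Lam: "Dz Lam = (\<lambda>q. Lam q * Dz Lg q)"
  unfolding Dz_def by (rule W_Lam)
lemma Dz_Mu: "Dz Mu = (\<lambda>q. - (Mu q * Dz Lg q))"
  unfolding Dz_def by (rule W_Mu)

lemma Dzb_add: "S F \<Longrightarrow> S G \<Longrightarrow> Dzb (\<lambda>q. F q + G q) = (\<lambda>q. Dzb F q + Dzb G q)"
  unfolding Dzb_def by (rule W_add)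
lemma Dzb_mult: "S F \<Longrightarrow> S G \<Longrightarrow> Dzb (\<lambda>q. F q * G q) = (\<lambda>q. Dzb F q * G q + F q * Dzb G q)"
  unfolding Dzb_def by (rule W_mult)
lemma Dzb_minus: "S F \<Longrightarrow> Dzb (\<lambda>q. - F q) = (\<lambda>q. - Dzb F q)"
  unfolding Dzb_def by (rule W_minus)
lemma Dzb_diff: "S F \<Longrightarrow> S G \<Longrightarrow> Dzb (\<lambda>q. F q - G q) = (\<lambda>q. Dzb F q - Dzb G q)"
  unfolding Dzb_def by (rule W_diff)
lemma Dzb_const: "Dzb (\<lambda>q. c) = (\<lambda>q. 0)"
  unfolding Dzb_def by (rule W_const)
lemma Dzb_R: "Dzb (R F) = Dzb F"
  unfolding Dzb_def by (rule W_R)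
lemma Dzb_S: "S F \<Longrightarrow> S (Dzb F)"
  unfolding Dzb_def by (rule S_W)
lemma Dzb_Lam: "Dzb Lam = (\<lambda>q. Lam q * Dzb Lg q)"
  unfolding Dzb_def by (rule W_Lam)
lemma Dzb_Mu: "Dzb Mu = (\<lambda>q. - (Mu q * Dzb Lg q))"
  unfolding Dzb_def by (rule W_Mu)

lemma Ds_add: "S F \<Longrightarrow> S G \<Longrightarrow> Ds k (\<lambda>q. F q + G q) = (\<lambda>q. Ds k F q + Ds k G q)"
  unfolding Ds_def by (rule W_add)
lemma Ds_mult: "S F \<Longrightarrow> S G \<Longrightarrow> Ds k (\<lambda>q. F q * G q) = (\<lambda>q. Ds k F q * G q + F q * Ds k G q)"
  unfolding Ds_def by (rule W_mult)
lemma Ds_minus: "S F \<Longrightarrow> Ds k (\<lambda>q. - F q) = (\<lambda>q. - Ds k F q)"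
  unfolding Ds_def by (rule W_minus)
lemma Ds_diff: "S F \<Longrightarrow> S G \<Longrightarrow> Ds k (\<lambda>q. F q - G q) = (\<lambda>q. Ds k F q - Ds k G q)"
  unfolding Ds_def by (rule W_diff)
lemma Ds_const: "Ds k (\<lambda>q. c) = (\<lambda>q. 0)"
  unfolding Ds_def by (rule W_const)
lemma Ds_R: "Ds k (R F) = Ds k F"
  unfolding Ds_def by (rule W_R)
lemma Ds_S: "S F \<Longrightarrow> S (Ds k F)"
  unfolding Ds_def by (rule S_W)
lemma Ds_Lam: "Ds k Lam = (\<lambda>q. Lam q * Ds k Lg q)"
  unfolding Ds_def by (rule W_Lam)
lemma Ds_Mu: "Ds k Mu = (\<lambda>q. - (Mu q * Ds k Lg q))"
  unfolding Ds_def by (rule W_Mu)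

lemma Dsb_add: "S F \<Longrightarrow> S G \<Longrightarrow> Dsb k (\<lambda>q. F q + G q) = (\<lambda>q. Dsb k F q + Dsb k G q)"
  unfolding Dsb_def by (rule W_add)
lemma Dsb_mult: "S F \<Longrightarrow> S G \<Longrightarrow> Dsb k (\<lambda>q. F q * G q) = (\<lambda>q. Dsb k F q * G q + F q * Dsb k G q)"
  unfolding Dsb_def by (rule W_mult)
lemma Dsb_minus: "S F \<Longrightarrow> Dsb k (\<lambda>q. - F q) = (\<lambda>q. - Dsb k F q)"
  unfolding Dsb_def by (rule W_minus)
lemma Dsb_diff: "S F \<Longrightarrow> S G \<Longrightarrow> Dsb k (\<lambda>q. F q - G q) = (\<lambda>q. Dsb k F q - Dsb k G q)"
  unfolding Dsb_def by (rule W_diff)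
lemma Dsb_const: "Dsb k (\<lambda>q. c) = (\<lambda>q. 0)"
  unfolding Dsb_def by (rule W_const)
lemma Dsb_R: "Dsb k (R F) = Dsb k F"
  unfolding Dsb_def by (rule W_R)
lemma Dsb_S: "S F \<Longrightarrow> S (Dsb k F)"
  unfolding Dsb_def by (rule S_W)
lemma Dsb_Lam: "Dsb k Lam = (\<lambda>q. Lam q * Dsb k Lg q)"
  unfolding Dsb_def by (rule W_Lam)
lemma Dsb_Mu: "Dsb k Mu = (\<lambda>q. - (Mu q * Dsb k Lg q))"
  unfolding Dsb_def by (rule W_Mu)

lemma c_z_s: "S F \<Longrightarrow> Dz (Ds k F) = Ds k (Dz F)"
  unfolding Dz_def Ds_def by (rule W_comm)

lemma c_z_sb: "S F \<Longrightarrow> Dz (Dsb k F) = Dsb k (Dz F)"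
  unfolding Dz_def Dsb_def by (rule W_comm)

lemma c_zb_s: "S F \<Longrightarrow> Dzb (Ds k F) = Ds k (Dzb F)"
  unfolding Dzb_def Ds_def by (rule W_comm)

lemma c_zb_sb: "S F \<Longrightarrow> Dzb (Dsb k F) = Dsb k (Dzb F)"
  unfolding Dzb_def Dsb_def by (rule W_comm)

lemma c_zb_z: "S F \<Longrightarrow> Dzb (Dz F) = Dz (Dzb F)"
  unfolding Dzb_def Dz_def by (rule W_comm)

lemma c_sb_s: "S F \<Longrightarrow> Dsb l (Ds k F) = Ds k (Dsb l F)"
  unfolding Dsb_def Ds_def by (rule W_comm)

lemma c_s_s: "S F \<Longrightarrow> Ds l (Ds k F) = Ds k (Ds l F)"
  unfolding Ds_def by (rule W_comm)
lemma c_sb_sb: "S F \<Longrightarrow> Dsb l (Dsb k F) = Dsb k (Dsb l F)"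
  unfolding Dsb_def by (rule W_comm)
lemma cnj_Dz: "S F \<Longrightarrow> cnj (Dz F q) = Dzb (\<lambda>q. cnj (F q)) q"
  unfolding Dz_def Dzb_def using W_cnj[of F "(0,1)" "(0,\<i>)" "- \<i>" q] by simp
lemma cnj_Dzb: "S F \<Longrightarrow> cnj (Dzb F q) = Dz (\<lambda>q. cnj (F q)) q"
  unfolding Dz_def Dzb_def using W_cnj[of F "(0,1)" "(0,\<i>)" "\<i>" q] by simp
lemma cnj_Ds: "S F \<Longrightarrow> cnj (Ds k F q) = Dsb k (\<lambda>q. cnj (F q)) q"
  unfolding Ds_def Dsb_def using W_cnj[of F "(axis k 1, 0)" "(axis k \<i>, 0)" "- \<i>" q] by simp
lemma cnj_Dsb: "S F \<Longrightarrow> cnj (Dsb k F q) = Ds k (\<lambda>q. cnj (F q)) q"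
  unfolding Ds_def Dsb_def using W_cnj[of F "(axis k 1, 0)" "(axis k \<i>, 0)" "\<i>" q] by simp

lemma Mu_Lam: "p \<in> U \<Longrightarrow> Mu p = inverse (Lam p)"
  by (simp add: Mu_def Lam_def R_in)
lemma Lam_nz: "p \<in> U \<Longrightarrow> Lam p \<noteq> 0"
  by (simp add: Lam_def R_in lamc_nz)

lemmas opsimps = R_add R_diff R_mult R_minus R_cnj R_divl R_lamc R_loglam R_dz R_dzb R_ds R_dsb
  Dz_add Dz_mult Dz_minus Dz_diff Dz_const Dz_R Dz_S Dz_Lam Dz_Mu
  Dzb_add Dzb_mult Dzb_minus Dzb_diff Dzb_const Dzb_R Dzb_S Dzb_Lam Dzb_Mu
  Ds_add Ds_mult Ds_minus Ds_diff Ds_const Ds_R Ds_S Ds_Lam Ds_Mu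
  Dsb_add Dsb_mult Dsb_minus Dsb_diff Dsb_const Dsb_R Dsb_S Dsb_Lam Dsb_Mu
  PDE c_z_s c_z_sb c_zb_s c_zb_sb c_zb_z c_sb_s c_s_s c_sb_sb
  cnj_Dz cnj_Dzb cnj_Ds cnj_Dsb cnj_Lam cnj_Mu cnj_Lg
  S_add S_mult S_minus S_diff S_cnj S_const S_R S_Lam S_Mu S_Lg
  top_dz top_dzb top_ds top_dsb top_lamc top_divl

end



context chart begin

lemma c_z_zb: "S F \<Longrightarrow> Dz (Dzb F) = Dzb (Dz F)"
  using c_zb_z by metis

lemma PDE1: "Dzb (Dz Lg) = Lam"
  using PDE c_zb_z[OF S_Lg] by simp
lemma PDE2: "Dzb (Dz (Dz Lg)) = Dz Lam"
  using c_zb_z[OF Dz_S[OF S_Lg]] PDE1 by simp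
lemma PDE3: "Dzb (Dz (Dz (Dz Lg))) = Dz (Dz Lam)"
  using c_zb_z[OF Dz_S[OF Dz_S[OF S_Lg]]] PDE2 by simp
lemma PDE4: "Dzb (Dz (Dz (Dz (Dz Lg)))) = Dz (Dz (Dz Lam))"
  using c_zb_z[OF Dz_S[OF Dz_S[OF Dz_S[OF S_Lg]]]] PDE3 by simp

lemma cnj_lamc: "cnj (lamc lam q) = lamc lam q" by (simp add: lamc_def)
lemma cnj_loglam: "cnj (loglam lam q) = loglam lam q" by (simp add: loglam_def)

lemmas ops2 = cnj_lamc cnj_loglam R_add R_diff R_mult R_minus R_cnj R_divl R_lamc R_loglam R_dz R_dzb R_ds R_dsb
  Dz_add Dz_mult Dz_minus Dz_diff Dz_const Dz_R Dz_S Dz_Lam Dz_Mu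
  Dzb_add Dzb_mult Dzb_minus Dzb_diff Dzb_const Dzb_R Dzb_S Dzb_Lam Dzb_Mu
  Ds_add Ds_mult Ds_minus Ds_diff Ds_const Ds_R Ds_S Ds_Lam Ds_Mu
  Dsb_add Dsb_mult Dsb_minus Dsb_diff Dsb_const Dsb_R Dsb_S Dsb_Lam Dsb_Mu
  PDE1 PDE2 PDE3 PDE4 c_z_s c_z_sb c_zb_s c_zb_sb c_z_zb c_sb_s c_s_s c_sb_sb
  cnj_Dz cnj_Dzb cnj_Ds cnj_Dsb cnj_Lam cnj_Mu cnj_Lg
  S_add S_mult S_minus S_diff S_cnj S_const S_R S_Lam S_Mu S_Lg
  top_dz top_dzb top_ds top_dsb top_lamc top_divl

lemma part3:
  assumes f: "S f" and p: "p \<in> U"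
  shows "xi lam k f p = - Acoef lam k p * Pop lam f p"
  unfolding xi_def Pop_def Acoef_def acoef_def
  using f p apply (simp add: ops2 Mu_Lam Lam_nz)
  apply (simp add: field_simps Lam_nz)
  done

lemma part1a:
  assumes f: "S f" and p: "p \<in> U"
  shows "box1 lam (vk lam k f) p - vk lam k (box1 lam f) p
              = box lam (vk lam k f) p - vk lam k (box lam f) p"
  unfolding box1_def box_def vk_def acoef_def
  using f p apply (simp add: ops2 Mu_Lam Lam_nz)
  apply (simp add: field_simps Lam_nz)
  done

lemma part1b:
  assumes f: "S f" and p: "p \<in> U"
  shows "box lam (vk lam k f) p - vk lam k (box lam f) p = xi lam k f p"
  unfolding xi_def box_def vk_def Acoef_def acoef_def
  using f p apply (simp add: ops2 Mu_Lam Lam_nz)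
  apply (simp add: field_simps Lam_nz)
  done

lemma part2a:
  assumes f: "S f" and p: "p \<in> U"
  shows "box1 lam (vbar lam l f) p - vbar lam l (box1 lam f) p
              = box lam (vbar lam l f) p - vbar lam l (box lam f) p"
  unfolding box1_def box_def vbar_def acoef_def
  using f p apply (simp add: ops2 Mu_Lam Lam_nz)
  apply (simp add: field_simps Lam_nz)
  done

lemma part2b:
  assumes f: "S f" and p: "p \<in> U"
  shows "box lam (vbar lam l f) p - vbar lam l (box lam f) p = xib lam l f p"
  unfolding xib_def box_def vbar_def Acoef_def acoef_def
  using f p apply (simp add: ops2 Mu_Lam Lam_nz)
  apply (simp add: field_simps Lam_nz)
  done

lemma part4:
  assumes p: "p \<in> U"
  shows "box1 lam (vk lam k (ecoef lam i j)) p
             = xi lam k (ecoef lam i j) p + xi lam i (ecoef lam k j) p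
               + LvB lam k i p * cnj (Acoef lam j p)"
  unfolding box1_def box_def vk_def xi_def ecoef_def LvB_def lie_beltrami_def Acoef_def acoef_def
  using p apply (simp only: ops2 complex_cnj_mult complex_cnj_minus complex_cnj_diff complex_cnj_add complex_cnj_divide)
  apply (simp add: ops2 Mu_Lam Lam_nz)
  apply (simp add: field_simps Lam_nz)
  done

end

theorem lemma3p6:
  fixes g :: nat and U :: "((complex ^ 'n::finite) \<times> complex) set"
    and lam :: "(complex ^ 'n) \<times> complex \<Rightarrow> real" and k l i j :: 'n
  assumes "g \<ge> 2" and "CARD('n) = 3 * g - 3"
    and "open U"
    and "smooth_on U (lamc lam)"
    and "\<forall>p\<in>U. lam p > 0"
    and "\<forall>p\<in>U. dz (dzb (loglam lam)) p = lamc lam p"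
  shows "(\<forall>f. smooth_on U f \<longrightarrow> (\<forall>p\<in>U.
            box1 lam (vk lam k f) p - vk lam k (box1 lam f) p
              = box lam (vk lam k f) p - vk lam k (box lam f) p
          \<and> box lam (vk lam k f) p - vk lam k (box lam f) p = xi lam k f p
          \<and> box1 lam (vbar lam l f) p - vbar lam l (box1 lam f) p
              = box lam (vbar lam l f) p - vbar lam l (box lam f) p
          \<and> box lam (vbar lam l f) p - vbar lam l (box lam f) p = xib lam l f p
          \<and> xi lam k f p = - Acoef lam k p * Pop lam f p))
       \<and> (\<forall>p\<in>U. box1 lam (vk lam k (ecoef lam i j)) p
             = xi lam k (ecoef lam i j) p + xi lam i (ecoef lam k j) p
               + LvB lam k i p * cnj (Acoef lam j p))"
proof -
  interpret chart U lam using assms(3-6) by unfold_locales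
  have A: "\<forall>f. smooth_on U f \<longrightarrow> (\<forall>p\<in>U.
            box1 lam (vk lam k f) p - vk lam k (box1 lam f) p
              = box lam (vk lam k f) p - vk lam k (box lam f) p
          \<and> box lam (vk lam k f) p - vk lam k (box lam f) p = xi lam k f p
          \<and> box1 lam (vbar lam l f) p - vbar lam l (box1 lam f) p
              = box lam (vbar lam l f) p - vbar lam l (box lam f) p
          \<and> box lam (vbar lam l f) p - vbar lam l (box lam f) p = xib lam l f p
          \<and> xi lam k f p = - Acoef lam k p * Pop lam f p)"
  proof (intro allI impI ballI conjI)
    fix f p assume f: "smooth_on U f" and p: "p \<in> U"
    show "box1 lam (vk lam k f) p - vk lam k (box1 lam f) p
              = box lam (vk lam k f) p - vk lam k (box lam f) p" by (rule part1a[OF f p])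
    show "box lam (vk lam k f) p - vk lam k (box lam f) p = xi lam k f p" by (rule part1b[OF f p])
    show "box1 lam (vbar lam l f) p - vbar lam l (box1 lam f) p
              = box lam (vbar lam l f) p - vbar lam l (box lam f) p" by (rule part2a[OF f p])
    show "box lam (vbar lam l f) p - vbar lam l (box lam f) p = xib lam l f p" by (rule part2b[OF f p])
    show "xi lam k f p = - Acoef lam k p * Pop lam f p" by (rule part3[OF f p])
  qed
  have B: "\<forall>p\<in>U. box1 lam (vk lam k (ecoef lam i j)) p
             = xi lam k (ecoef lam i j) p + xi lam i (ecoef lam k j) p
               + LvB lam k i p * cnj (Acoef lam j p)"
    using part4 by blast
  show ?thesis using A B by (rule conjI)
qed

end
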